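(* Let $f\in\mathbb{Z}_2[z]$ with $f(0)=1$ and $\deg f=n$. Then $P_f\le 4^n$.
   Context: $\mathbb{Z}_2$ is the two-element field. For $f\in\mathbb{Z}_2[z]$ with $f(0)=1$ and $\deg f=n$, let $V_f$ be the set of polynomials in $\mathbb{Z}_2[z]$ of degree less than $n$ (including $0$), and let $\sigma_0,\sigma_1:V_f\to V_f$ be the maps $\sigma_0(g)=(gz)\bmod f$ and $\sigma_1(g)=(gz+1)\bmod f$, where $h\bmod f$ is the remainder of $h$ upon division by $f$; these are bijections since $f(0)=1$. Let $G_f$ be the permutation group on $V_f$ generated by $\sigma_0,\sigma_1$, and $P_f=|G_f|$. (Equivalently, $\sigma_0,\sigma_1$ are the transition maps of the division-by-$f$ automaton on states $V_f$ with transitions $g\xrightarrow{b}(gz+b)\bmod f$; every word $u\in\{0,1\}^*$ labels, from any state, a path returning to it after reading $u^{P_f}$.) *)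

theory Defs
  imports "HOL-Computational_Algebra.Polynomial" "HOL-Library.Z2" "HOL-Library.FuncSet"
begin

text \<open>States of the division-by-f automaton: polynomials of degree less than deg f (including 0).\<close>
definition V :: "bit poly \<Rightarrow> bit poly set" where
  "V f = {g. g = 0 \<or> degree g < degree f}"

definition sigma :: "bit poly \<Rightarrow> bit \<Rightarrow> bit poly \<Rightarrow> bit poly" where
  "sigma f b g = (g * [:0, 1:] + [:b:]) mod f"

definition word_map :: "bit poly \<Rightarrow> bit list \<Rightarrow> bit poly \<Rightarrow> bit poly" where
  "word_map f u = fold (sigma f) u"

text \<open>The group G_f generated by sigma_0, sigma_1: the smallest set of permutations of V f
  (represented as functions restricted to V f, i.e. undefined outside) containing the
  identity and the generators and closed under composition and inverses.\<close>
inductive_set G :: "bit poly \<Rightarrow> (bit poly \<Rightarrow> bit poly) set" for f where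
  G_id: "restrict id (V f) \<in> G f"
| G_gen: "restrict (sigma f b) (V f) \<in> G f"
| G_comp: "p \<in> G f \<Longrightarrow> q \<in> G f \<Longrightarrow> restrict (p \<circ> q) (V f) \<in> G f"
| G_inv: "p \<in> G f \<Longrightarrow> restrict (inv_into (V f) p) (V f) \<in> G f"

definition P :: "bit poly \<Rightarrow> nat" where
  "P f = card (G f)"

end

theory Submission
  imports Defs
begin

definition aff :: "bit poly \<Rightarrow> bit poly \<Rightarrow> bit poly \<Rightarrow> bit poly \<Rightarrow> bit poly" where
  "aff f a h = restrict (\<lambda>g. (a * g + h) mod f) (V f)"

definition A :: "bit poly \<Rightarrow> (bit poly \<Rightarrow> bit poly) set" where
  "A f = {aff f a h | a h. \<exists>a'. f dvd (a * a' - 1)}"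

lemma mod_in_V: "f \<noteq> 0 \<Longrightarrow> x mod f \<in> V f"
  using degree_mod_less[of f x] unfolding V_def by auto

lemma V_mod: "x \<in> V f \<Longrightarrow> x mod f = x"
  unfolding V_def using mod_poly_less by auto

lemma dvd_mod_eq: "(f::bit poly) dvd (x - y) \<Longrightarrow> x mod f = y mod f"
  by (simp add: mod_eq_dvd_iff)

lemma aff_in_V: "f \<noteq> 0 \<Longrightarrow> g \<in> V f \<Longrightarrow> aff f a h g \<in> V f"
  unfolding aff_def by (simp add: mod_in_V)

lemma aff_comp:
  assumes "f \<noteq> 0"
  shows "restrict (aff f a h \<circ> aff f c d) (V f) = aff f (a*c) (a*d+h)"
proof
  fix g
  show "restrict (aff f a h \<circ> aff f c d) (V f) g = aff f (a*c) (a*d+h) g"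
  proof (cases "g \<in> V f")
    case True
    have "f dvd ((a * ((c*g+d) mod f) + h) - (a*c*g + (a*d+h)))"
    proof -
      have "f dvd ((c*g+d) mod f - (c*g+d))" by (simp add: mod_eq_dvd_iff[symmetric])
      then have "f dvd a * ((c*g+d) mod f - (c*g+d))" by simp
      moreover have "a * ((c*g+d) mod f - (c*g+d)) = (a * ((c*g+d) mod f) + h) - (a*c*g + (a*d+h))"
        by (simp add: algebra_simps)
      ultimately show ?thesis by simp
    qed
    then show ?thesis using True assms
      by (simp add: aff_def mod_in_V dvd_mod_eq)
  next
    case False
    then show ?thesis by (simp add: aff_def)
  qed
qed

lemma aff_inv:
  assumes "f \<noteq> 0" "f dvd (a*a' - 1)"
  shows "restrict (inv_into (V f) (aff f a h)) (V f) = aff f a' (-(a'*h))"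
proof -
  have key: "aff f a h (aff f a' (-(a'*h)) x) = x" if "x \<in> V f" for x
  proof -
    let ?r = "(a'*x + -(a'*h)) mod f"
    have "f dvd (?r - (a'*x + -(a'*h)))" by (simp add: mod_eq_dvd_iff[symmetric])
    then have d1: "f dvd a * (?r - (a'*x + -(a'*h)))" by simp
    have d2: "f dvd (a*a' - 1) * (x - h)" using assms(2) by simp
    have "(a * ?r + h) - x = a * (?r - (a'*x + -(a'*h))) + (a*a' - 1) * (x - h)"
      by (simp add: algebra_simps)
    then have "f dvd ((a * ?r + h) - x)" using d1 d2 by simp
    then have "(a * ?r + h) mod f = x mod f" by (rule dvd_mod_eq)
    then show ?thesis using that assms(1) by (simp add: aff_def mod_in_V V_mod)
  qed
  have key2: "aff f a' (-(a'*h)) (aff f a h x) = x" if "x \<in> V f" for x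
  proof -
    let ?r = "(a*x + h) mod f"
    have "f dvd (?r - (a*x + h))" by (simp add: mod_eq_dvd_iff[symmetric])
    then have d1: "f dvd a' * (?r - (a*x + h))" by simp
    have d2: "f dvd (a*a' - 1) * x" using assms(2) by simp
    have "(a' * ?r + -(a'*h)) - x = a' * (?r - (a*x + h)) + (a*a' - 1) * x"
      by (simp add: algebra_simps)
    then have "f dvd ((a' * ?r + -(a'*h)) - x)" using d1 d2 by simp
    then have "(a' * ?r + -(a'*h)) mod f = x mod f" by (rule dvd_mod_eq)
    then show ?thesis using that assms(1) by (simp add: aff_def mod_in_V V_mod)
  qed
  have inj: "inj_on (aff f a h) (V f)"
    by (metis inj_onI key2)
  show ?thesis
  proof
    fix y
    show "restrict (inv_into (V f) (aff f a h)) (V f) y = aff f a' (-(a'*h)) y"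
    proof (cases "y \<in> V f")
      case True
      then show ?thesis
        using inv_into_f_eq[OF inj aff_in_V[OF assms(1) True] key[OF True]] True by simp
    next
      case False
      then show ?thesis by (simp add: aff_def)
    qed
  qed
qed

lemma z_unit:
  fixes f :: "bit poly"
  assumes "poly f 0 = 1"
  shows "\<exists>a'. f dvd ([:0,1:] * a' - 1)"
proof -
  obtain c q where f: "f = pCons c q" by (cases f) auto
  have "c = 1" using assms f by (simp add: poly_0_coeff_0)
  have "f = [:0,1:] * q + 1" using f \<open>c = 1\<close>
    by (simp add: one_pCons)
  then have "[:0,1:] * (-q) - 1 = - f" by (simp add: algebra_simps)
  then show ?thesis by (metis dvd_minus_iff dvd_refl)
qed

lemma G_sub_A:
  assumes "poly f 0 = 1"
  shows "G f \<subseteq> A f"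
proof
  have f0: "f \<noteq> 0" using assms by auto
  fix p assume "p \<in> G f"
  then show "p \<in> A f"
  proof induction
    case G_id
    have "restrict id (V f) = aff f 1 0"
      by (auto simp: aff_def V_mod)
    moreover have "f dvd (1 * 1 - (1::bit poly))" by simp
    ultimately show ?case unfolding A_def by blast
  next
    case (G_gen b)
    have "restrict (sigma f b) (V f) = aff f [:0,1:] [:b:]"
      by (auto simp: aff_def sigma_def mult.commute)
    then show ?case unfolding A_def using z_unit[OF assms] by blast
  next
    case (G_comp p q)
    from G_comp.IH(1) obtain a h a' where p: "p = aff f a h" and a: "f dvd (a * a' - 1)"
      unfolding A_def by blast
    from G_comp.IH(2) obtain c d c' where q: "q = aff f c d" and c: "f dvd (c * c' - 1)"
      unfolding A_def by blast
    have e: "(a*a' - 1) * (c*c') + (c*c' - 1) = (a*c)*(a'*c') - 1" by (simp add: algebra_simps)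
    have "f dvd (a*a' - 1) * (c*c') + (c*c' - 1)" using a c by (intro dvd_add dvd_mult2)
    then have "f dvd ((a*c)*(a'*c') - 1)" unfolding e .
    then show ?case unfolding p q aff_comp[OF f0] A_def by blast
  next
    case (G_inv p)
    from G_inv.IH obtain a h a' where p: "p = aff f a h" and a: "f dvd (a * a' - 1)"
      unfolding A_def by blast
    have "f dvd (a' * a - 1)" using a by (simp add: mult.commute)
    then show ?case unfolding p aff_inv[OF f0 a] A_def by blast
  qed
qed

lemma A_sub:
  assumes "f \<noteq> 0"
  shows "A f \<subseteq> (\<lambda>(a,h). aff f a h) ` (V f \<times> V f)"
proof
  fix p assume "p \<in> A f"
  then obtain a h where p: "p = aff f a h" unfolding A_def by blast
  have "aff f a h = aff f (a mod f) (h mod f)"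
  proof
    fix g
    have "f dvd ((a*g+h) - ((a mod f)*g + h mod f))"
    proof -
      have e: "(a - a mod f) * g + (h - h mod f) = (a*g+h) - ((a mod f)*g + h mod f)"
        by (simp add: algebra_simps)
      have "f dvd (a - a mod f)" "f dvd (h - h mod f)"
        by (simp_all add: mod_eq_dvd_iff[symmetric])
      then have "f dvd (a - a mod f) * g + (h - h mod f)" by (intro dvd_add dvd_mult2)
      then show ?thesis unfolding e .
    qed
    then show "aff f a h g = aff f (a mod f) (h mod f) g"
      unfolding aff_def using dvd_mod_eq by simp
  qed
  then show "p \<in> (\<lambda>(a,h). aff f a h) ` (V f \<times> V f)"
    using p mod_in_V[OF assms] by (intro rev_image_eqI[of "(a mod f, h mod f)"]) auto
qed

lemma UNIV_bit: "(UNIV :: bit set) = {0, 1}"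
  using bit_not_zero_iff by auto

lemma V_card:
  "finite (V f) \<and> card (V f) \<le> 2 ^ degree f"
proof -
  let ?m = "\<lambda>g. restrict (coeff g) {..<degree f}"
  let ?B = "PiE {..<degree f} (\<lambda>_. (UNIV :: bit set))"
  have inj: "inj_on ?m (V f)"
  proof (rule inj_onI)
    fix x y assume x: "x \<in> V f" and y: "y \<in> V f" and e: "?m x = ?m y"
    show "x = y"
    proof (rule poly_eqI)
      fix n
      show "coeff x n = coeff y n"
      proof (cases "n < degree f")
        case True
        then show ?thesis using fun_cong[OF e, of n] by simp
      next
        case False
        then have "coeff x n = 0" "coeff y n = 0" using x y unfolding V_def
          by (auto intro: coeff_eq_0)
        then show ?thesis by simp
      qed
    qed
  qed
  have sub: "?m ` V f \<subseteq> ?B" by (intro image_subsetI) (simp only: restrict_PiE_iff, simp)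
  have fin: "finite ?B" by (intro finite_PiE) (auto simp: UNIV_bit)
  have cB: "card ?B = 2 ^ degree f" by (simp add: card_PiE UNIV_bit numeral_2_eq_2)
  have "finite (V f)" using inj_on_finite[OF inj sub fin] .
  moreover have "card (V f) \<le> card ?B" using card_inj_on_le[OF inj sub fin] .
  ultimately show ?thesis using cB by simp
qed

theorem mainTheorem15:
  fixes f :: "bit poly"
  assumes "poly f 0 = 1"
  shows "P f \<le> 4 ^ degree f"
proof -
  have f0: "f \<noteq> 0" using assms by auto
  have fin: "finite (V f)" and cV: "card (V f) \<le> 2 ^ degree f" using V_card by auto
  have finP: "finite (V f \<times> V f)" using fin by simp
  have "G f \<subseteq> (\<lambda>(a,h). aff f a h) ` (V f \<times> V f)"
    using G_sub_A[OF assms] A_sub[OF f0] by blast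
  then have "card (G f) \<le> card ((\<lambda>(a,h). aff f a h) ` (V f \<times> V f))"
    using finP by (intro card_mono) auto
  also have "\<dots> \<le> card (V f \<times> V f)" using finP by (rule card_image_le)
  also have "\<dots> = card (V f) * card (V f)" by (simp add: card_cartesian_product)
  also have "\<dots> \<le> 2 ^ degree f * 2 ^ degree f" using cV by (intro mult_mono) auto
  also have "\<dots> = 4 ^ degree f" by (simp add: power_mult_distrib[symmetric])
  finally show ?thesis unfolding P_def .
qed

end
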